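(* Let $M$ be a layered Markov Transition Model, $\pi_e$ a deterministic evaluation policy, $\Phi$ any aggregation scheme, and let the offline distribution be admissible: $\mu_h(x,a)=d_h^{\pi_b}(x;M)\pi_b(a|x)$ for all $h\in[H]$ and some policy $\pi_b$. Suppose $\frac{1}{\pi_b(\pi_e(x)|x)}\le\mathsf{C}_{\mathcal{A}}$ for all $x\in\mathcal{X}$. Then for every $\epsilon>0$ (for which the maximum defining $\bar{\mathsf{C}}_\epsilon$ is over a nonempty set), $\bar{\mathsf{C}}_\epsilon(M,\Phi,\mu)\le(\mathsf{C}_{\mathcal{A}})^H$.
   Context: Markov Transition Model $M=(\mathcal{X},\mathcal{A},T,H,\rho)$ with finite layered state space $\mathcal{X}_1\cup\dots\cup\mathcal{X}_H$, finite actions, $T(\cdot|x,a)$ supported on $\mathcal{X}_{h+1}$ for $x\in\mathcal{X}_h$, $\rho\in\Delta(\mathcal{X}_1)$. $d_h^\pi(x;M)=\Pr(x_h=x)$ under $x_1\sim\rho$, $a_h\sim\pi(\cdot|x_h)$, $x_{h+1}\sim T(\cdot|x_h,a_h)$. Aggregation scheme: $\Phi=\Phi_1\cup\dots\cup\Phi_H$, $\Phi_h$ a partition of $\mathcal{X}_h$. Aggregated transitions, for $\phi\in\Phi_h,\phi'\in\Phi_{h+1}$: $\bar T(\phi'|\phi,\pi)=\frac{\sum_{x\in\phi}\sum_{x'\in\phi'}\sum_a\pi(a|x)\mu_h(x,a)T(x'|x,a)}{\sum_{x\in\phi}\sum_a\pi(a|x)\mu_h(x,a)}$. Aggregated occupancy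 $\bar d_h^\pi(\phi)$: law of $\phi_h$ under $\phi_1\sim\bar\rho$, $\phi_{i+1}\sim\bar T(\cdot|\phi_i,\pi)$, with $\bar\rho(\phi)=\sum_{x\in\phi}\rho(x)$. Aggregated concentrability: $\bar{\mathsf{C}}_\epsilon(M,\Phi,\mu)=\max_h\max\{\frac{\sum_{\phi\in\mathcal{I}}\bar d_h^{\pi_e}(\phi)}{\sum_{\phi\in\mathcal{I}}\sum_{x\in\phi}\mu_h(x,\pi_e(x))}:\mathcal{I}\subseteq\Phi_h,\ \sum_{\phi\in\mathcal{I}}\bar d_h^{\pi_e}(\phi)\ge\epsilon\}$. *)

theory Defs
  imports Complex_Main "HOL-Library.Disjoint_Sets"
begin

text \<open>A (stochastic) policy is a function p x a = p(a|x);
transition kernel T x a x' = T(x'|x,a); initial distribution rho.\<close>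

definition layered_MTM ::
  "('x::finite \<Rightarrow> nat) \<Rightarrow> nat \<Rightarrow> ('x \<Rightarrow> 'a::finite \<Rightarrow> 'x \<Rightarrow> real) \<Rightarrow> ('x \<Rightarrow> real) \<Rightarrow> bool" where
  "layered_MTM lay H T rho \<longleftrightarrow>
     (\<forall>x. lay x \<in> {1..H}) \<and>
     (\<forall>x a x'. T x a x' \<ge> 0) \<and>
     (\<forall>x a x'. T x a x' \<noteq> 0 \<longrightarrow> lay x' = Suc (lay x)) \<and>
     (\<forall>x a. lay x < H \<longrightarrow> (\<Sum>x'\<in>UNIV. T x a x') = 1) \<and>
     (\<forall>x. rho x \<ge> 0) \<and> (\<forall>x. rho x \<noteq> 0 \<longrightarrow> lay x = 1) \<and>
     (\<Sum>x\<in>UNIV. rho x) = 1"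

definition is_policy :: "('x \<Rightarrow> 'a::finite \<Rightarrow> real) \<Rightarrow> bool" where
  "is_policy p \<longleftrightarrow> (\<forall>x a. p x a \<ge> 0) \<and> (\<forall>x. (\<Sum>a\<in>UNIV. p x a) = 1)"

definition det_policy :: "('x \<Rightarrow> 'a) \<Rightarrow> 'x \<Rightarrow> 'a \<Rightarrow> real" where
  "det_policy pe x a = (if a = pe x then 1 else 0)"

text \<open>Occupancy d_h^p(x;M), layers indexed from 1 (index 0 unused, set to 0).\<close>
fun occ :: "('x::finite \<Rightarrow> 'a::finite \<Rightarrow> 'x \<Rightarrow> real) \<Rightarrow> ('x \<Rightarrow> real) \<Rightarrow>
            ('x \<Rightarrow> 'a \<Rightarrow> real) \<Rightarrow> nat \<Rightarrow> 'x \<Rightarrow> real" where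
  "occ T rho p 0 x' = 0"
| "occ T rho p (Suc 0) x' = rho x'"
| "occ T rho p (Suc (Suc h)) x' =
     (\<Sum>x\<in>UNIV. \<Sum>a\<in>UNIV. occ T rho p (Suc h) x * p x a * T x a x')"

text \<open>Aggregated transition \<bar>T(phi'|phi,p) at layer h (division by 0 yields 0).\<close>
definition agg_trans :: "('x::finite \<Rightarrow> 'a::finite \<Rightarrow> 'x \<Rightarrow> real) \<Rightarrow>
     (nat \<Rightarrow> 'x \<Rightarrow> 'a \<Rightarrow> real) \<Rightarrow> ('x \<Rightarrow> 'a \<Rightarrow> real) \<Rightarrow> nat \<Rightarrow> 'x set \<Rightarrow> 'x set \<Rightarrow> real" where
  "agg_trans T mu p h phi phi' =
     (\<Sum>x\<in>phi. \<Sum>x'\<in>phi'. \<Sum>a\<in>UNIV. p x a * mu h x a * T x a x') /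
     (\<Sum>x\<in>phi. \<Sum>a\<in>UNIV. p x a * mu h x a)"

text \<open>Aggregated occupancy \<bar>d_h^p(phi), layers indexed from 1.\<close>
fun agg_occ :: "('x::finite \<Rightarrow> 'a::finite \<Rightarrow> 'x \<Rightarrow> real) \<Rightarrow> ('x \<Rightarrow> real) \<Rightarrow>
     (nat \<Rightarrow> 'x set set) \<Rightarrow> (nat \<Rightarrow> 'x \<Rightarrow> 'a \<Rightarrow> real) \<Rightarrow> ('x \<Rightarrow> 'a \<Rightarrow> real) \<Rightarrow>
     nat \<Rightarrow> 'x set \<Rightarrow> real" where
  "agg_occ T rho Phi mu p 0 phi' = 0"
| "agg_occ T rho Phi mu p (Suc 0) phi' = (\<Sum>x\<in>phi'. rho x)"
| "agg_occ T rho Phi mu p (Suc (Suc h)) phi' =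
     (\<Sum>phi\<in>Phi (Suc h). agg_occ T rho Phi mu p (Suc h) phi * agg_trans T mu p (Suc h) phi phi')"

definition aggregation_scheme :: "('x \<Rightarrow> nat) \<Rightarrow> nat \<Rightarrow> (nat \<Rightarrow> 'x set set) \<Rightarrow> bool" where
  "aggregation_scheme lay H Phi \<longleftrightarrow> (\<forall>h\<in>{1..H}. partition_on {x. lay x = h} (Phi h))"

definition agg_conc_set :: "('x::finite \<Rightarrow> 'a::finite \<Rightarrow> 'x \<Rightarrow> real) \<Rightarrow> ('x \<Rightarrow> real) \<Rightarrow> nat \<Rightarrow>
     (nat \<Rightarrow> 'x set set) \<Rightarrow> (nat \<Rightarrow> 'x \<Rightarrow> 'a \<Rightarrow> real) \<Rightarrow> ('x \<Rightarrow> 'a) \<Rightarrow> real \<Rightarrow> real set" where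
  "agg_conc_set T rho H Phi mu pe eps =
     {(\<Sum>phi\<in>I. agg_occ T rho Phi mu (det_policy pe) h phi) /
      (\<Sum>phi\<in>I. \<Sum>x\<in>phi. mu h x (pe x)) | h I.
        h \<in> {1..H} \<and> I \<subseteq> Phi h \<and>
        (\<Sum>phi\<in>I. agg_occ T rho Phi mu (det_policy pe) h phi) \<ge> eps}"

definition agg_conc :: "('x::finite \<Rightarrow> 'a::finite \<Rightarrow> 'x \<Rightarrow> real) \<Rightarrow> ('x \<Rightarrow> real) \<Rightarrow> nat \<Rightarrow>
     (nat \<Rightarrow> 'x set set) \<Rightarrow> (nat \<Rightarrow> 'x \<Rightarrow> 'a \<Rightarrow> real) \<Rightarrow> ('x \<Rightarrow> 'a) \<Rightarrow> real \<Rightarrow> real" where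
  "agg_conc T rho H Phi mu pe eps = Max (agg_conc_set T rho H Phi mu pe eps)"

end

theory Submission
  imports Defs
begin

lemma det_sum: "(\<Sum>a\<in>UNIV. det_policy (pe :: 'x \<Rightarrow> 'a::finite) x a * g a) = (g (pe x) :: real)"
proof -
  have "\<And>a. det_policy pe x a * g a = (if a = pe x then g a else 0)"
    by (simp add: det_policy_def)
  then show ?thesis by simp
qed

lemma occ_nonneg:
  assumes "\<forall>x. rho x \<ge> 0" "\<forall>x a x'. T x a x' \<ge> 0" "\<forall>x a. p x a \<ge> (0::real)"
  shows "\<forall>x. occ T rho p h x \<ge> 0"
proof (induction h)
  case 0 then show ?case by simp
next
  case (Suc h)
  show ?case
  proof (cases h)
    case 0 then show ?thesis using assms by simp
  next
    case (Suc k)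
    show ?thesis using Suc.IH assms unfolding Suc
      by (auto intro!: sum_nonneg mult_nonneg_nonneg)
  qed
qed

lemma part_sum:
  fixes f :: "'x::finite \<Rightarrow> real"
  assumes "disjoint P" "\<forall>x. f x \<ge> 0"
  shows "(\<Sum>phi\<in>P. \<Sum>x\<in>phi. f x) \<le> (\<Sum>x\<in>UNIV. f x)"
proof -
  have "(\<Sum>phi\<in>P. \<Sum>x\<in>phi. f x) = (\<Sum>x\<in>\<Union>P. f x)"
    using assms(1) by (subst sum.Union_disjoint) (auto simp: disjoint_def)
  also have "\<dots> \<le> (\<Sum>x\<in>UNIV. f x)"
    using assms(2) by (intro sum_mono2) auto
  finally show ?thesis .
qed

lemma term_bound:
  fixes a c D N w CA :: real
  assumes "c \<ge> 0" "N \<ge> 0" "w \<ge> 0" "D \<le> CA * w" "a \<le> c * D" "CA \<ge> 0"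
  shows "a * (N / w) \<le> c * CA * N"
proof -
  have q: "N / w \<ge> 0" using assms by simp
  have "a * (N / w) \<le> c * D * (N / w)" using mult_right_mono[OF assms(5) q] .
  also have "\<dots> \<le> c * CA * N"
  proof (cases "w = 0")
    case True then show ?thesis using assms by simp
  next
    case False
    have "c * D * (N / w) \<le> c * (CA * w) * (N / w)"
      using assms q by (intro mult_right_mono mult_left_mono) auto
    also have "\<dots> = c * CA * N" using False by simp
    finally show ?thesis .
  qed
  finally show ?thesis .
qed

theorem mainTheorem9:
  fixes lay :: "'x::finite \<Rightarrow> nat" and H :: nat
    and T :: "'x \<Rightarrow> 'a::finite \<Rightarrow> 'x \<Rightarrow> real" and rho :: "'x \<Rightarrow> real"
    and pe :: "'x \<Rightarrow> 'a" and Phi :: "nat \<Rightarrow> 'x set set"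
    and mu :: "nat \<Rightarrow> 'x \<Rightarrow> 'a \<Rightarrow> real" and pb :: "'x \<Rightarrow> 'a \<Rightarrow> real"
    and CA eps :: real
  assumes "layered_MTM lay H T rho"
    and "aggregation_scheme lay H Phi"
    and "is_policy pb"
    and "\<forall>h\<in>{1..H}. \<forall>x a. mu h x a = occ T rho pb h x * pb x a"
    and "\<forall>x. pb x (pe x) > 0 \<and> 1 / pb x (pe x) \<le> CA"
    and "eps > 0"
    and "agg_conc_set T rho H Phi mu pe eps \<noteq> {}"
  shows "agg_conc T rho H Phi mu pe eps \<le> CA ^ H"
proof -
  note M = assms(1)[unfolded layered_MTM_def]
  note P = assms(3)[unfolded is_policy_def]
  have rho0: "\<forall>x. rho x \<ge> 0" and T0: "\<forall>x a x'. T x a x' \<ge> 0" using M by auto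
  have pb0: "\<forall>x a. pb x a \<ge> 0" using P by auto
  have occ0: "\<And>h x. occ T rho pb h x \<ge> 0" using occ_nonneg[OF rho0 T0 pb0] by blast
  have pble: "\<And>x. pb x (pe x) \<le> 1"
  proof -
    fix x
    have "pb x (pe x) \<le> (\<Sum>a\<in>UNIV. pb x a)" using pb0 by (intro member_le_sum) auto
    then show "pb x (pe x) \<le> 1" using P by simp
  qed
  have CApb: "\<And>x. 1 \<le> CA * pb x (pe x)"
  proof -
    fix x
    have "pb x (pe x) > 0" "1 / pb x (pe x) \<le> CA" using assms(5) by auto
    then show "1 \<le> CA * pb x (pe x)" by (simp add: divide_le_eq mult.commute)
  qed
  have CA1: "CA \<ge> 1"
  proof -
    have "1 \<le> CA * pb undefined (pe undefined)" by (rule CApb)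
    also have "\<dots> \<le> CA"
    proof (cases "CA \<ge> 0")
      case True then show ?thesis using pble[of undefined] mult_left_mono[of _ 1 CA] by simp
    next
      case False
      then have "CA * pb undefined (pe undefined) < 0"
        using assms(5) by (simp add: mult_neg_pos)
      then show ?thesis using CApb[of undefined] by linarith
    qed
    finally show ?thesis .
  qed
  have CA0: "CA \<ge> 0" using CA1 by simp
  define D where "D h phi = (\<Sum>x\<in>phi. occ T rho pb h x)" for h phi
  define w where "w h phi = (\<Sum>x\<in>phi. mu h x (pe x))" for h phi
  have mu0: "\<And>h x a. h \<in> {1..H} \<Longrightarrow> mu h x a \<ge> 0"
    using assms(4) occ0 pb0 by simp
  have Dw: "\<And>h phi. h \<in> {1..H} \<Longrightarrow> D h phi \<le> CA * w h phi"
  proof -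
    fix h phi assume h: "h \<in> {1..H}"
    have "D h phi \<le> (\<Sum>x\<in>phi. CA * mu h x (pe x))"
      unfolding D_def
    proof (rule sum_mono)
      fix x
      have "occ T rho pb h x * 1 \<le> occ T rho pb h x * (CA * pb x (pe x))"
        using occ0 CApb by (intro mult_left_mono) auto
      then show "occ T rho pb h x \<le> CA * mu h x (pe x)"
        using assms(4) h by (simp add: algebra_simps)
    qed
    then show "D h phi \<le> CA * w h phi" unfolding w_def by (simp add: sum_distrib_left)
  qed
  have w0: "\<And>h phi. h \<in> {1..H} \<Longrightarrow> w h phi \<ge> 0"
    unfolding w_def using mu0 by (simp add: sum_nonneg)
  have key: "Suc n \<le> H \<Longrightarrow> \<forall>phi. agg_occ T rho Phi mu (det_policy pe) (Suc n) phi
              \<le> CA ^ n * D (Suc n) phi" for n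
  proof (induction n)
    case 0 then show ?case by (simp add: D_def)
  next
    case (Suc n)
    let ?h = "Suc n"
    have hH: "?h \<in> {1..H}" using Suc.prems by simp
    show ?case
    proof
      fix phi'
      define N where "N phi = (\<Sum>x\<in>phi. mu ?h x (pe x) * (\<Sum>x'\<in>phi'. T x (pe x) x'))" for phi
      have tr: "agg_trans T mu (det_policy pe) ?h phi phi' = N phi / w ?h phi" for phi
      proof -
        have "(\<Sum>x\<in>phi. \<Sum>x'\<in>phi'. \<Sum>a\<in>UNIV. det_policy pe x a * mu ?h x a * T x a x') = N phi"
          unfolding N_def
          by (simp add: mult.assoc det_sum[where g="\<lambda>a. mu _ _ a * T _ a _"] sum_distrib_left)
        moreover have "(\<Sum>x\<in>phi. \<Sum>a\<in>UNIV. det_policy pe x a * mu ?h x a) = w ?h phi"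
          unfolding w_def by (simp add: det_sum)
        ultimately show ?thesis unfolding agg_trans_def by simp
      qed
      have N0: "N phi \<ge> 0" for phi
        unfolding N_def using mu0[OF hH] T0 by (auto intro!: sum_nonneg mult_nonneg_nonneg)
      have IH: "\<forall>phi. agg_occ T rho Phi mu (det_policy pe) ?h phi \<le> CA ^ n * D ?h phi"
        using Suc.IH Suc.prems by simp
      have "agg_occ T rho Phi mu (det_policy pe) (Suc ?h) phi'
          = (\<Sum>phi\<in>Phi ?h. agg_occ T rho Phi mu (det_policy pe) ?h phi * (N phi / w ?h phi))"
        by (simp add: tr)
      also have "\<dots> \<le> (\<Sum>phi\<in>Phi ?h. CA ^ n * CA * N phi)"
      proof (rule sum_mono)
        fix phi
        show "agg_occ T rho Phi mu (det_policy pe) ?h phi * (N phi / w ?h phi) \<le> CA ^ n * CA * N phi"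
          by (rule term_bound[where D="D ?h phi"]) (use IH N0 w0[OF hH] Dw[OF hH] CA0 in auto)
      qed
      also have "\<dots> = CA ^ Suc n * (\<Sum>phi\<in>Phi ?h. N phi)"
        by (simp add: sum_distrib_left mult.commute mult.left_commute)
      also have "(\<Sum>phi\<in>Phi ?h. N phi)
          \<le> (\<Sum>x\<in>UNIV. mu ?h x (pe x) * (\<Sum>x'\<in>phi'. T x (pe x) x'))"
        unfolding N_def
      proof (rule part_sum)
        show "disjoint (Phi ?h)" using assms(2) hH
          unfolding aggregation_scheme_def partition_on_def by blast
        show "\<forall>x. 0 \<le> mu ?h x (pe x) * (\<Sum>x'\<in>phi'. T x (pe x) x')"
          using mu0[OF hH] T0 by (auto intro!: sum_nonneg mult_nonneg_nonneg)
      qed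
      also have "\<dots> \<le> (\<Sum>x\<in>UNIV. occ T rho pb ?h x * (\<Sum>a\<in>UNIV. pb x a * (\<Sum>x'\<in>phi'. T x a x')))"
      proof (rule sum_mono)
        fix x
        have "pb x (pe x) * (\<Sum>x'\<in>phi'. T x (pe x) x') \<le> (\<Sum>a\<in>UNIV. pb x a * (\<Sum>x'\<in>phi'. T x a x'))"
          using pb0 T0 by (intro member_le_sum) (auto intro!: sum_nonneg mult_nonneg_nonneg)
        then have "occ T rho pb ?h x * (pb x (pe x) * (\<Sum>x'\<in>phi'. T x (pe x) x'))
           \<le> occ T rho pb ?h x * (\<Sum>a\<in>UNIV. pb x a * (\<Sum>x'\<in>phi'. T x a x'))"
          using occ0 by (intro mult_left_mono) auto
        then show "mu ?h x (pe x) * (\<Sum>x'\<in>phi'. T x (pe x) x')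
           \<le> occ T rho pb ?h x * (\<Sum>a\<in>UNIV. pb x a * (\<Sum>x'\<in>phi'. T x a x'))"
          using assms(4) hH by (simp add: mult.assoc)
      qed
      also have "\<dots> = D (Suc ?h) phi'"
      proof -
        have "D (Suc ?h) phi' = (\<Sum>x'\<in>phi'. \<Sum>x\<in>UNIV. \<Sum>a\<in>UNIV. occ T rho pb ?h x * pb x a * T x a x')"
          unfolding D_def by simp
        also have "\<dots> = (\<Sum>x\<in>UNIV. \<Sum>x'\<in>phi'. \<Sum>a\<in>UNIV. occ T rho pb ?h x * pb x a * T x a x')"
          by (rule sum.swap)
        also have "\<dots> = (\<Sum>x\<in>UNIV. \<Sum>a\<in>UNIV. \<Sum>x'\<in>phi'. occ T rho pb ?h x * pb x a * T x a x')"
          by (intro sum.cong refl sum.swap)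
        also have "\<dots> = (\<Sum>x\<in>UNIV. occ T rho pb ?h x * (\<Sum>a\<in>UNIV. pb x a * (\<Sum>x'\<in>phi'. T x a x')))"
          by (simp add: sum_distrib_left mult.assoc)
        finally show ?thesis by simp
      qed
      finally show "agg_occ T rho Phi mu (det_policy pe) (Suc ?h) phi' \<le> CA ^ Suc n * D (Suc ?h) phi'"
        using CA0 by (simp add: mult_left_mono)
    qed
  qed
  let ?f = "\<lambda>(h, I). (\<Sum>phi\<in>I. agg_occ T rho Phi mu (det_policy pe) h phi) /
      (\<Sum>phi\<in>I. \<Sum>x\<in>phi. mu h x (pe x))"
  have sub: "agg_conc_set T rho H Phi mu pe eps \<subseteq> ?f ` ({1..H} \<times> UNIV)"
    unfolding agg_conc_set_def by (auto simp: image_iff)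
  have fin: "finite (agg_conc_set T rho H Phi mu pe eps)"
    by (rule finite_subset[OF sub]) auto
  have bound: "r \<le> CA ^ H" if r: "r \<in> agg_conc_set T rho H Phi mu pe eps" for r
  proof -
    obtain h I where hI: "h \<in> {1..H}" "I \<subseteq> Phi h"
      and rdef: "r = (\<Sum>phi\<in>I. agg_occ T rho Phi mu (det_policy pe) h phi) /
      (\<Sum>phi\<in>I. \<Sum>x\<in>phi. mu h x (pe x))"
      using r unfolding agg_conc_set_def by blast
    obtain n where hn: "h = Suc n" using hI by (cases h) auto
    have den: "(\<Sum>phi\<in>I. \<Sum>x\<in>phi. mu h x (pe x)) = (\<Sum>phi\<in>I. w h phi)"
      unfolding w_def ..
    have "(\<Sum>phi\<in>I. agg_occ T rho Phi mu (det_policy pe) h phi) \<le> (\<Sum>phi\<in>I. CA ^ n * D h phi)"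
      using key[of n] hI hn by (intro sum_mono) auto
    also have "\<dots> \<le> (\<Sum>phi\<in>I. CA ^ n * (CA * w h phi))"
      using Dw[OF hI(1)] CA0 by (intro sum_mono mult_left_mono) auto
    also have "\<dots> = CA ^ h * (\<Sum>phi\<in>I. w h phi)"
      using hn by (simp add: sum_distrib_left mult_ac)
    finally have num: "(\<Sum>phi\<in>I. agg_occ T rho Phi mu (det_policy pe) h phi)
        \<le> CA ^ h * (\<Sum>phi\<in>I. w h phi)" .
    have W0: "(\<Sum>phi\<in>I. w h phi) \<ge> 0" using w0[OF hI(1)] by (simp add: sum_nonneg)
    have CAh: "CA ^ h \<le> CA ^ H" using hI CA1 by (intro power_increasing) auto
    show ?thesis
    proof (cases "(\<Sum>phi\<in>I. w h phi) = 0")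
      case True then show ?thesis using rdef den CA0 by simp
    next
      case False
      then have "r \<le> CA ^ h" using rdef den num W0 by (simp add: divide_le_eq)
      then show ?thesis using CAh by simp
    qed
  qed
  show ?thesis unfolding agg_conc_def using fin assms(7) bound by (simp add: Max_le_iff)
qed

end
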